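(* Let $\mathbf{x}=x_1,\ldots,x_n$ and $\mathbf{u}=u_1,\ldots,u_m$ be differential indeterminates over $\mathbb{C}$, and let $\mathbf{f}=f_1,\ldots,f_n\in\mathbb{C}[\mathbf{x},\mathbf{u}]$ and $\mathbf{g}=g_1,\ldots,g_s\in\mathbb{C}[\mathbf{x},\mathbf{u}]$ be polynomials such that the polynomial ideal $(\mathbf{g})\subseteq\mathbb{C}[\mathbf{x},\mathbf{u}]$ is radical and $0$-dimensional. Then $$1\in[\dot{\mathbf{x}}-\mathbf{f},\mathbf{g}]\subseteq\mathbb{C}\{\mathbf{x},\mathbf{u}\}\quad\Longleftrightarrow\quad 1\in(\dot{\mathbf{x}}-\mathbf{f},\mathbf{g},\dot{\mathbf{g}})\subseteq\mathbb{C}[\mathbf{x},\mathbf{u},\dot{\mathbf{x}},\dot{\mathbf{u}}].$$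
   Context: $\mathbb{C}\{\mathbf{x},\mathbf{u}\}$ is the differential polynomial ring $\mathbb{C}[x_j^{(p)},u_k^{(p)}: p\in\mathbb{N}_0]$ with derivation $x_j^{(p)}\mapsto x_j^{(p+1)}$, $u_k^{(p)}\mapsto u_k^{(p+1)}$, and $\mathbb{C}$ as constants; $\dot{z}$ denotes $z^{(1)}$, and for a family of polynomials $\mathbf{h}$, $\dot{\mathbf{h}}$ denotes the family of their (total) derivatives. $[\mathbf{h}]$ denotes the differential ideal generated by $\mathbf{h}$, and $(\cdot)$ the ordinary polynomial ideal in the indicated polynomial ring. $\dot{\mathbf{x}}-\mathbf{f}$ denotes $\dot x_1-f_1,\ldots,\dot x_n-f_n$. *)

theory Defs
  imports Complex_Main "HOL-Library.Poly_Mapping"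
begin

text \<open>Differential indeterminates: X j p is x_j^(p), U k p is u_k^(p).\<close>
datatype dvar = X nat nat | U nat nat

type_synonym dpoly = "(dvar \<Rightarrow>\<^sub>0 nat) \<Rightarrow>\<^sub>0 complex"

definition pvar :: "dvar \<Rightarrow> dpoly" where
  "pvar v = Poly_Mapping.single (Poly_Mapping.single v 1) 1"

definition pconst :: "complex \<Rightarrow> dpoly" where
  "pconst c = Poly_Mapping.single 0 c"

definition vars :: "dpoly \<Rightarrow> dvar set" where
  "vars p = \<Union> (Poly_Mapping.keys ` Poly_Mapping.keys p)"

fun shift :: "dvar \<Rightarrow> dvar" where
  "shift (X j p) = X j (Suc p)"
| "shift (U k p) = U k (Suc p)"

text \<open>Total derivative: the C-linear derivation extending shift (Leibniz rule on monomials).\<close>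
definition deriv :: "dpoly \<Rightarrow> dpoly" where
  "deriv q = (\<Sum>mo\<in>Poly_Mapping.keys q. \<Sum>v\<in>Poly_Mapping.keys (mo :: dvar \<Rightarrow>\<^sub>0 nat).
      Poly_Mapping.single (mo - Poly_Mapping.single v 1 + Poly_Mapping.single (shift v) 1)
        (Poly_Mapping.lookup q mo * of_nat (Poly_Mapping.lookup mo v)))"

definition polyring :: "dvar set \<Rightarrow> dpoly set" where
  "polyring V = {p. vars p \<subseteq> V}"

definition ideal_in :: "dpoly set \<Rightarrow> dpoly set \<Rightarrow> dpoly set" where
  "ideal_in R S = {p. \<exists>F c. finite F \<and> F \<subseteq> S \<and> (\<forall>q\<in>F. c q \<in> R) \<and> p = (\<Sum>q\<in>F. c q * q)}"

definition diff_ideal_in :: "dpoly set \<Rightarrow> dpoly set \<Rightarrow> dpoly set" where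
  "diff_ideal_in R S = ideal_in R {(deriv ^^ k) h | h k. h \<in> S}"

definition radical_in :: "dpoly set \<Rightarrow> dpoly set \<Rightarrow> bool" where
  "radical_in R I \<longleftrightarrow> (\<forall>p\<in>R. \<forall>k. p ^ k \<in> I \<longrightarrow> p \<in> I)"

text \<open>Zero-dimensional: R/I is a finite-dimensional C-vector space.\<close>
definition zero_dim_in :: "dpoly set \<Rightarrow> dpoly set \<Rightarrow> bool" where
  "zero_dim_in R I \<longleftrightarrow> (\<exists>B. finite B \<and> B \<subseteq> R \<and>
      (\<forall>p\<in>R. \<exists>a. p - (\<Sum>b\<in>B. pconst (a b) * b) \<in> I))"

text \<open>Variables of C[x,u] (order 0), of C[x,u,x',u'] (order \<le> 1), of C{x,u} (all orders).\<close>
definition vars_upto :: "nat \<Rightarrow> nat \<Rightarrow> nat \<Rightarrow> dvar set" where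
  "vars_upto n m r = {X j p | j p. j < n \<and> p \<le> r} \<union> {U k p | k p. k < m \<and> p \<le> r}"

definition vars_all :: "nat \<Rightarrow> nat \<Rightarrow> dvar set" where
  "vars_all n m = {X j p | j p. j < n} \<union> {U k p | k p. k < m}"

end

theory Submission
  imports Defs "HOL-Computational_Algebra.Computational_Algebra"
begin


lemma pconst_add: "pconst (a + b) = pconst a + pconst b"
  by (simp add: pconst_def single_add)
lemma pconst_mult: "pconst (a * b) = pconst a * pconst b"
  by (simp add: pconst_def mult_single)
lemma pconst_1: "pconst 1 = 1" by (simp add: pconst_def)
lemma pconst_0: "pconst 0 = 0" by (simp add: pconst_def)
lemma pconst_uminus: "pconst (- a) = - pconst a" by (simp add: pconst_def single_uminus)

lemma vars_add: "vars (p + q) \<subseteq> vars p \<union> vars q"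
  unfolding vars_def using keys_add[of p q] by auto
lemma vars_uminus: "vars (- p) = vars p"
  unfolding vars_def by (simp add: keys_minus)
lemma vars_mult: "vars (p * q) \<subseteq> vars p \<union> vars q"
proof
  fix v assume "v \<in> vars (p * q)"
  then obtain mo where mo: "mo \<in> Poly_Mapping.keys (p*q)" "v \<in> Poly_Mapping.keys mo" unfolding vars_def by auto
  then obtain a b where "mo = a + b" "a \<in> Poly_Mapping.keys p" "b \<in> Poly_Mapping.keys q" using keys_mult[of p q] by auto
  then show "v \<in> vars p \<union> vars q" using mo keys_add[of a b] unfolding vars_def by auto
qed
lemma vars_pconst: "vars (pconst c) = {}"
  by (simp add: vars_def pconst_def)
lemma vars_pvar: "vars (pvar v) = {v}"
  by (simp add: vars_def pvar_def)
lemma vars_0: "vars 0 = {}" by (simp add: vars_def)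
lemma vars_1: "vars 1 = {}" using vars_pconst[of 1] by (simp add: pconst_1)

lemma polyring_add: "p \<in> polyring V \<Longrightarrow> q \<in> polyring V \<Longrightarrow> p + q \<in> polyring V"
  using vars_add[of p q] by (auto simp: polyring_def)
lemma polyring_mult: "p \<in> polyring V \<Longrightarrow> q \<in> polyring V \<Longrightarrow> p * q \<in> polyring V"
  using vars_mult[of p q] by (auto simp: polyring_def)
lemma polyring_uminus: "p \<in> polyring V \<Longrightarrow> - p \<in> polyring V"
  by (auto simp: polyring_def vars_uminus)
lemma polyring_diff: "p \<in> polyring V \<Longrightarrow> q \<in> polyring V \<Longrightarrow> p - q \<in> polyring V"
  using polyring_add[of p V "-q"] polyring_uminus by simp
lemma polyring_pconst: "pconst c \<in> polyring V" by (simp add: polyring_def vars_pconst)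
lemma polyring_0: "0 \<in> polyring V" by (simp add: polyring_def vars_0)
lemma polyring_1: "1 \<in> polyring V" by (simp add: polyring_def vars_1)
lemma polyring_pvar: "v \<in> V \<Longrightarrow> pvar v \<in> polyring V" by (simp add: polyring_def vars_pvar)
lemma polyring_mono: "V \<subseteq> W \<Longrightarrow> polyring V \<subseteq> polyring W" by (auto simp: polyring_def)
lemma polyring_sum: "(\<And>i. i \<in> A \<Longrightarrow> f i \<in> polyring V) \<Longrightarrow> sum f A \<in> polyring V"
  by (induction A rule: infinite_finite_induct) (auto intro: polyring_add polyring_0)
lemma polyring_power: "p \<in> polyring V \<Longrightarrow> p ^ k \<in> polyring V"
  by (induction k) (auto intro: polyring_mult polyring_1)

lemma ideal_in_0: "0 \<in> ideal_in R S"
  unfolding ideal_in_def by (rule CollectI, rule exI[of _ "{}"], rule exI[of _ "\<lambda>_. 0"]) simp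

lemma ideal_in_gen: "s \<in> S \<Longrightarrow> 1 \<in> R \<Longrightarrow> s \<in> ideal_in R S"
  unfolding ideal_in_def by (rule CollectI, rule exI[of _ "{s}"], rule exI[of _ "\<lambda>_. 1"]) simp

lemma ideal_inI:
  assumes "finite F" "F \<subseteq> S" "\<forall>q\<in>F. c q \<in> R" "p = (\<Sum>q\<in>F. c q * q)"
  shows "p \<in> ideal_in R S"
  unfolding ideal_in_def by (rule CollectI, rule exI[of _ F], rule exI[of _ c]) (use assms in simp)

lemma ideal_inE:
  assumes "p \<in> ideal_in R S"
  obtains F c where "finite F" "F \<subseteq> S" "\<forall>q\<in>F. c q \<in> R" "p = (\<Sum>q\<in>F. c q * q)"
  using assms unfolding ideal_in_def by (auto simp only: mem_Collect_eq)

lemma ideal_in_add: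
  assumes R: "R = polyring V" and p: "p \<in> ideal_in R S" and q: "q \<in> ideal_in R S"
  shows "p + q \<in> ideal_in R S"
proof -
  from p obtain F c where F: "finite F" "F \<subseteq> S" "\<forall>x\<in>F. c x \<in> R" "p = (\<Sum>x\<in>F. c x * x)"
    by (rule ideal_inE)
  from q obtain G d where G: "finite G" "G \<subseteq> S" "\<forall>x\<in>G. d x \<in> R" "q = (\<Sum>x\<in>G. d x * x)"
    by (rule ideal_inE)
  define e where "e x = (if x \<in> F then c x else 0) + (if x \<in> G then d x else 0)" for x
  have 1: "(\<Sum>x\<in>F \<union> G. (if x \<in> F then c x else 0) * x) = (\<Sum>x\<in>F. c x * x)"
    by (rule sum.mono_neutral_cong_right) (use F G in auto)
  have 2: "(\<Sum>x\<in>F \<union> G. (if x \<in> G then d x else 0) * x) = (\<Sum>x\<in>G. d x * x)"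
    by (rule sum.mono_neutral_cong_right) (use F G in auto)
  have 3: "p + q = (\<Sum>x\<in>F \<union> G. e x * x)"
    unfolding e_def distrib_right sum.distrib 1 2 using F(4) G(4) by (rule arg_cong2)
  have 4: "\<forall>x\<in>F\<union>G. e x \<in> R"
  proof
    fix x assume "x \<in> F \<union> G"
    have a: "(if x \<in> F then c x else 0) \<in> polyring V" using F R polyring_0[of V] by simp
    have b: "(if x \<in> G then d x else 0) \<in> polyring V" using G R polyring_0[of V] by simp
    show "e x \<in> R" unfolding e_def R by (rule polyring_add[OF a b])
  qed
  show ?thesis by (rule ideal_inI[OF _ _ 4 3]) (use F G in auto)
qed

lemma ideal_in_mult:
  assumes R: "R = polyring V" and p: "p \<in> ideal_in R S" and r: "r \<in> R"
  shows "r * p \<in> ideal_in R S"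
proof -
  from p obtain F c where F: "finite F" "F \<subseteq> S" "\<forall>x\<in>F. c x \<in> R" "p = (\<Sum>x\<in>F. c x * x)"
    by (rule ideal_inE)
  have 1: "r * p = (\<Sum>x\<in>F. (r * c x) * x)" unfolding F(4) sum_distrib_left mult.assoc ..
  have 2: "\<forall>x\<in>F. r * c x \<in> R" 
  proof
    fix x assume "x \<in> F"
    then have "c x \<in> polyring V" using F(3) R by simp
    moreover have "r \<in> polyring V" using r R by simp
    ultimately show "r * c x \<in> R" unfolding R by (rule polyring_mult[rotated])
  qed
  show ?thesis by (rule ideal_inI[OF F(1) F(2) 2 1])
qed

lemma ideal_in_uminus:
  assumes R: "R = polyring V" and p: "p \<in> ideal_in R S"
  shows "- p \<in> ideal_in R S"
proof -
  have "-1 \<in> R" unfolding R by (rule polyring_uminus[OF polyring_1])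
  from ideal_in_mult[OF R p this] show ?thesis by simp
qed

lemma ideal_in_diff:
  assumes R: "R = polyring V" and p: "p \<in> ideal_in R S" and q: "q \<in> ideal_in R S"
  shows "p - q \<in> ideal_in R S"
  using ideal_in_add[OF R p ideal_in_uminus[OF R q]] by simp

lemma ideal_in_sum:
  assumes R: "R = polyring V" and f: "\<And>i. i \<in> A \<Longrightarrow> f i \<in> ideal_in R S"
  shows "sum f A \<in> ideal_in R S"
  using f
proof (induction A rule: infinite_finite_induct)
  case (infinite A) then show ?case by (simp add: ideal_in_0)
next
  case empty then show ?case by (simp add: ideal_in_0)
next
  case (insert x F)
  have "f x \<in> ideal_in R S" using insert.prems by simp
  moreover have "sum f F \<in> ideal_in R S" using insert.IH insert.prems by simp
  ultimately show ?case using insert.hyps by (simp add: ideal_in_add[OF R])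
qed

lemma ideal_in_mono:
  assumes RR: "R \<subseteq> R'" and SS: "S \<subseteq> S'"
  shows "ideal_in R S \<subseteq> ideal_in R' S'"
proof
  fix p assume "p \<in> ideal_in R S"
  then obtain F c where F: "finite F" "F \<subseteq> S" "\<forall>x\<in>F. c x \<in> R" "p = (\<Sum>x\<in>F. c x * x)"
    by (rule ideal_inE)
  have "F \<subseteq> S'" using F(2) SS by (rule subset_trans)
  moreover have "\<forall>x\<in>F. c x \<in> R'" using F(3) RR by blast
  ultimately show "p \<in> ideal_in R' S'" by (rule ideal_inI[OF F(1) _ _ F(4)])
qed



lemma keys_add_nat: "Poly_Mapping.keys (a + b) = Poly_Mapping.keys a \<union> Poly_Mapping.keys (b :: 'x \<Rightarrow>\<^sub>0 nat)"
  by (auto simp: in_keys_iff lookup_add)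

lemma vars_single: "vars (Poly_Mapping.single mo c) \<subseteq> Poly_Mapping.keys mo"
  by (simp add: vars_def)

lemma pm_expand: "p = (\<Sum>mo\<in>Poly_Mapping.keys p. Poly_Mapping.single mo (Poly_Mapping.lookup p mo))"
proof (rule poly_mapping_eqI)
  fix k
  have "Poly_Mapping.lookup (\<Sum>mo\<in>Poly_Mapping.keys p. Poly_Mapping.single mo (Poly_Mapping.lookup p mo)) k
      = (\<Sum>mo\<in>Poly_Mapping.keys p. if mo = k then Poly_Mapping.lookup p mo else 0)"
    by (simp add: lookup_sum lookup_single when_def)
  also have "\<dots> = Poly_Mapping.lookup p k"
    by (simp add: sum.delta in_keys_iff)
  finally show "Poly_Mapping.lookup p k = Poly_Mapping.lookup (\<Sum>mo\<in>Poly_Mapping.keys p. Poly_Mapping.single mo (Poly_Mapping.lookup p mo)) k" by simp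
qed

lemma mult_expand: "(p::dpoly) * q = (\<Sum>a\<in>Poly_Mapping.keys p. \<Sum>b\<in>Poly_Mapping.keys q.
    Poly_Mapping.single (a + b) (Poly_Mapping.lookup p a * Poly_Mapping.lookup q b))"
proof -
  have "p * q = (\<Sum>a\<in>Poly_Mapping.keys p. Poly_Mapping.single a (Poly_Mapping.lookup p a)) *
      (\<Sum>b\<in>Poly_Mapping.keys q. Poly_Mapping.single b (Poly_Mapping.lookup q b))"
    using pm_expand[of p] pm_expand[of q] by simp
  also have "\<dots> = (\<Sum>a\<in>Poly_Mapping.keys p. \<Sum>b\<in>Poly_Mapping.keys q.
    Poly_Mapping.single (a + b) (Poly_Mapping.lookup p a * Poly_Mapping.lookup q b))"
    by (simp add: sum_product mult_single)
  finally show ?thesis .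
qed

definition lin :: "((dvar \<Rightarrow>\<^sub>0 nat) \<Rightarrow> complex \<Rightarrow> dpoly) \<Rightarrow> dpoly \<Rightarrow> dpoly" where
  "lin D p = (\<Sum>mo\<in>Poly_Mapping.keys p. D mo (Poly_Mapping.lookup p mo))"

locale addD =
  fixes D :: "(dvar \<Rightarrow>\<^sub>0 nat) \<Rightarrow> complex \<Rightarrow> dpoly"
  assumes D_add: "D mo (a + b) = D mo a + D mo b"
begin

lemma D_0: "D mo 0 = 0"
  using D_add[of mo 0 0] by simp

lemma lin_superset:
  assumes "finite K" "Poly_Mapping.keys p \<subseteq> K"
  shows "lin D p = (\<Sum>mo\<in>K. D mo (Poly_Mapping.lookup p mo))"
  unfolding lin_def
  by (rule sum.mono_neutral_left) (use assms in \<open>auto simp: in_keys_iff D_0\<close>)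

lemma lin_add: "lin D (p + q) = lin D p + lin D q"
proof -
  let ?K = "Poly_Mapping.keys p \<union> Poly_Mapping.keys q"
  have f: "finite ?K" by simp
  have "lin D (p + q) = (\<Sum>mo\<in>?K. D mo (Poly_Mapping.lookup (p+q) mo))"
    by (rule lin_superset[OF f keys_add])
  also have "\<dots> = (\<Sum>mo\<in>?K. D mo (Poly_Mapping.lookup p mo)) + (\<Sum>mo\<in>?K. D mo (Poly_Mapping.lookup q mo))"
    by (simp add: lookup_add D_add sum.distrib)
  also have "\<dots> = lin D p + lin D q"
    using lin_superset[OF f, of p] lin_superset[OF f, of q] by simp
  finally show ?thesis .
qed

lemma lin_0: "lin D 0 = 0" by (simp add: lin_def)

lemma lin_single: "lin D (Poly_Mapping.single mo c) = D mo c"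
proof -
  have "lin D (Poly_Mapping.single mo c) = (\<Sum>k\<in>{mo}. D k (Poly_Mapping.lookup (Poly_Mapping.single mo c) k))"
    by (rule lin_superset) auto
  then show ?thesis by simp
qed

lemma lin_sum: "lin D (sum f A) = (\<Sum>a\<in>A. lin D (f a))"
  by (induction A rule: infinite_finite_induct) (simp_all add: lin_0 lin_add)

lemma lin_uminus: "lin D (- p) = - lin D p"
proof -
  have "lin D p + lin D (-p) = 0" using lin_add[of p "-p"] lin_0 by simp
  from minus_unique[OF this] show ?thesis by simp
qed

lemma lin_diff: "lin D (p - q) = lin D p - lin D q"
  using lin_add[of p "-q"] lin_uminus[of q] by simp

end

fun ord :: "dvar \<Rightarrow> nat" where
  "ord (X j p) = p" | "ord (U k p) = p"

definition Z0 :: "dvar set" where "Z0 = {v. ord v = 0}"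

definition Tm :: "(dvar \<Rightarrow>\<^sub>0 nat) \<Rightarrow> complex \<Rightarrow> dpoly" where
  "Tm mo c = (if Poly_Mapping.keys mo \<subseteq> Z0 then Poly_Mapping.single mo c else 0)"

definition trunc :: "dpoly \<Rightarrow> dpoly" where "trunc = lin Tm"

interpretation T: addD Tm
  by standard (simp add: Tm_def single_add)

lemma trunc_add: "trunc (p + q) = trunc p + trunc q" unfolding trunc_def by (rule T.lin_add)
lemma trunc_sum: "trunc (sum f A) = (\<Sum>a\<in>A. trunc (f a))" unfolding trunc_def by (rule T.lin_sum)
lemma trunc_diff: "trunc (p - q) = trunc p - trunc q" unfolding trunc_def by (rule T.lin_diff)
lemma trunc_single: "trunc (Poly_Mapping.single mo c) = Tm mo c" unfolding trunc_def by (rule T.lin_single)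

lemma trunc_mult: "trunc (p * q) = trunc p * trunc q"
proof -
  have s: "Tm (a + b) (c * d) = Tm a c * Tm b d" for a b c d
    by (auto simp: Tm_def keys_add_nat mult_single)
  have "trunc (p * q) = (\<Sum>a\<in>Poly_Mapping.keys p. \<Sum>b\<in>Poly_Mapping.keys q.
      Tm a (Poly_Mapping.lookup p a) * Tm b (Poly_Mapping.lookup q b))"
    by (subst mult_expand) (simp add: trunc_sum trunc_single s)
  also have "\<dots> = trunc p * trunc q"
    by (simp add: trunc_def lin_def sum_product)
  finally show ?thesis .
qed

lemma trunc_id: assumes "vars p \<subseteq> Z0" shows "trunc p = p"
proof -
  have "trunc p = (\<Sum>mo\<in>Poly_Mapping.keys p. Poly_Mapping.single mo (Poly_Mapping.lookup p mo))"
    unfolding trunc_def lin_def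
  proof (rule sum.cong)
    fix mo assume "mo \<in> Poly_Mapping.keys p"
    then have "Poly_Mapping.keys mo \<subseteq> Z0" using assms by (auto simp: vars_def)
    then show "Tm mo (Poly_Mapping.lookup p mo) = Poly_Mapping.single mo (Poly_Mapping.lookup p mo)"
      by (simp add: Tm_def)
  qed simp
  then show ?thesis using pm_expand[of p] by simp
qed

lemma trunc_polyring: assumes "p \<in> polyring V" shows "trunc p \<in> polyring (V \<inter> Z0)"
  unfolding trunc_def lin_def
proof (rule polyring_sum)
  fix mo assume mo: "mo \<in> Poly_Mapping.keys p"
  then have "Poly_Mapping.keys mo \<subseteq> V" using assms by (auto simp: vars_def polyring_def)
  then show "Tm mo (Poly_Mapping.lookup p mo) \<in> polyring (V \<inter> Z0)"
    using vars_single[of mo] by (auto simp: Tm_def polyring_def vars_0)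
qed



abbreviation sg :: "dvar \<Rightarrow> dvar \<Rightarrow>\<^sub>0 nat" where "sg v \<equiv> Poly_Mapping.single v 1"

definition Dm :: "(dvar \<Rightarrow>\<^sub>0 nat) \<Rightarrow> complex \<Rightarrow> dpoly" where
  "Dm mo c = (\<Sum>v\<in>Poly_Mapping.keys mo.
      Poly_Mapping.single (mo - sg v + sg (shift v)) (c * of_nat (Poly_Mapping.lookup mo v)))"

lemma deriv_lin: "deriv = lin Dm"
  by (rule ext) (simp add: deriv_def lin_def Dm_def)

interpretation DD: addD Dm
  by standard (simp add: Dm_def single_add distrib_right sum.distrib)

lemma deriv_add: "deriv (p + q) = deriv p + deriv q" unfolding deriv_lin by (rule DD.lin_add)
lemma deriv_sum: "deriv (sum f A) = (\<Sum>a\<in>A. deriv (f a))" unfolding deriv_lin by (rule DD.lin_sum)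
lemma deriv_diff: "deriv (p - q) = deriv p - deriv q" unfolding deriv_lin by (rule DD.lin_diff)
lemma deriv_single: "deriv (Poly_Mapping.single mo c) = Dm mo c" unfolding deriv_lin by (rule DD.lin_single)

lemma Dm_superset:
  assumes "finite W" "Poly_Mapping.keys mo \<subseteq> W"
  shows "Dm mo c = (\<Sum>v\<in>W. Poly_Mapping.single (mo - sg v + sg (shift v)) (c * of_nat (Poly_Mapping.lookup mo v)))"
  unfolding Dm_def
  by (rule sum.mono_neutral_left) (use assms in \<open>auto simp: in_keys_iff\<close>)

lemma mono_shift_eq:
  assumes "Poly_Mapping.lookup a v \<noteq> 0"
  shows "a + b - sg v + sg w = (a - sg v + sg w) + (b :: dvar \<Rightarrow>\<^sub>0 nat)"
proof (rule poly_mapping_eqI)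
  fix k show "Poly_Mapping.lookup (a + b - sg v + sg w) k = Poly_Mapping.lookup (a - sg v + sg w + b) k"
    using assms by (cases "v = k") (auto simp: lookup_add lookup_minus lookup_single when_def)
qed

lemma Dm_leibniz: "Dm (a + b) (c * d) = Dm a c * Poly_Mapping.single b d + Poly_Mapping.single a c * Dm b d"
proof -
  let ?W = "Poly_Mapping.keys a \<union> Poly_Mapping.keys b"
  have f: "finite ?W" by simp
  let ?M = "\<lambda>v. a + b - sg v + sg (shift v)"
  have L: "Dm (a + b) (c * d) = (\<Sum>v\<in>?W. Poly_Mapping.single (?M v) (c * d * of_nat (Poly_Mapping.lookup (a+b) v)))"
    by (rule Dm_superset[OF f]) (simp add: keys_add_nat)
  have R1: "Dm a c * Poly_Mapping.single b d = (\<Sum>v\<in>?W. Poly_Mapping.single (?M v) (c * d * of_nat (Poly_Mapping.lookup a v)))"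
  proof -
    have "Dm a c * Poly_Mapping.single b d = (\<Sum>v\<in>?W. Poly_Mapping.single (a - sg v + sg (shift v)) (c * of_nat (Poly_Mapping.lookup a v)) * Poly_Mapping.single b d)"
      by (subst Dm_superset[OF f]) (auto simp: sum_distrib_right)
    also have "\<dots> = (\<Sum>v\<in>?W. Poly_Mapping.single (?M v) (c * d * of_nat (Poly_Mapping.lookup a v)))"
    proof (rule sum.cong)
      fix v
      show "Poly_Mapping.single (a - sg v + sg (shift v)) (c * of_nat (Poly_Mapping.lookup a v)) * Poly_Mapping.single b d
        = Poly_Mapping.single (?M v) (c * d * of_nat (Poly_Mapping.lookup a v))"
      proof (cases "Poly_Mapping.lookup a v = 0")
        case True then show ?thesis by simp
      next
        case False
        then have e: "a - sg v + sg (shift v) + b = ?M v" using mono_shift_eq[of a v b "shift v"] by simp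
        show ?thesis unfolding mult_single e by (simp add: mult_ac)
      qed
    qed simp
    finally show ?thesis .
  qed
  have R2: "Poly_Mapping.single a c * Dm b d = (\<Sum>v\<in>?W. Poly_Mapping.single (?M v) (c * d * of_nat (Poly_Mapping.lookup b v)))"
  proof -
    have "Poly_Mapping.single a c * Dm b d = (\<Sum>v\<in>?W. Poly_Mapping.single a c * Poly_Mapping.single (b - sg v + sg (shift v)) (d * of_nat (Poly_Mapping.lookup b v)))"
      by (subst Dm_superset[OF f]) (auto simp: sum_distrib_left)
    also have "\<dots> = (\<Sum>v\<in>?W. Poly_Mapping.single (?M v) (c * d * of_nat (Poly_Mapping.lookup b v)))"
    proof (rule sum.cong)
      fix v
      show "Poly_Mapping.single a c * Poly_Mapping.single (b - sg v + sg (shift v)) (d * of_nat (Poly_Mapping.lookup b v))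
        = Poly_Mapping.single (?M v) (c * d * of_nat (Poly_Mapping.lookup b v))"
        using mono_shift_eq[of b v a "shift v"]
        by (cases "Poly_Mapping.lookup b v = 0") (auto simp: mult_single add.commute mult_ac)
    qed simp
    finally show ?thesis .
  qed
  show ?thesis unfolding L R1 R2
    by (simp add: sum.distrib[symmetric] single_add[symmetric] lookup_add distrib_left)
qed

lemma deriv_mult: "deriv (p * q) = deriv p * q + p * deriv q"
proof -
  have "deriv (p * q) = (\<Sum>a\<in>Poly_Mapping.keys p. \<Sum>b\<in>Poly_Mapping.keys q.
      Dm a (Poly_Mapping.lookup p a) * Poly_Mapping.single b (Poly_Mapping.lookup q b) +
      Poly_Mapping.single a (Poly_Mapping.lookup p a) * Dm b (Poly_Mapping.lookup q b))"
    by (subst mult_expand) (simp add: deriv_sum deriv_single Dm_leibniz)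
  also have "\<dots> = deriv p * q + p * deriv q"
  proof -
    have qe: "(\<Sum>b\<in>Poly_Mapping.keys q. Poly_Mapping.single b (Poly_Mapping.lookup q b)) = q"
      by (rule pm_expand[symmetric])
    have pe: "(\<Sum>a\<in>Poly_Mapping.keys p. Poly_Mapping.single a (Poly_Mapping.lookup p a)) = p"
      by (rule pm_expand[symmetric])
    have 1: "deriv p * q = (\<Sum>a\<in>Poly_Mapping.keys p. \<Sum>b\<in>Poly_Mapping.keys q.
      Dm a (Poly_Mapping.lookup p a) * Poly_Mapping.single b (Poly_Mapping.lookup q b))"
    proof -
      have "deriv p * q = lin Dm p * (\<Sum>b\<in>Poly_Mapping.keys q. Poly_Mapping.single b (Poly_Mapping.lookup q b))"
        by (simp only: qe deriv_lin)
      then show ?thesis by (simp only: lin_def sum_product)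
    qed
    have 2: "p * deriv q = (\<Sum>a\<in>Poly_Mapping.keys p. \<Sum>b\<in>Poly_Mapping.keys q.
      Poly_Mapping.single a (Poly_Mapping.lookup p a) * Dm b (Poly_Mapping.lookup q b))"
    proof -
      have "p * deriv q = (\<Sum>a\<in>Poly_Mapping.keys p. Poly_Mapping.single a (Poly_Mapping.lookup p a)) * lin Dm q"
        by (simp only: pe deriv_lin)
      then show ?thesis by (simp only: lin_def sum_product)
    qed
    show ?thesis unfolding 1 2 by (simp add: sum.distrib)
  qed
  finally show ?thesis .
qed

lemma deriv_pconst: "deriv (pconst c) = 0"
  by (simp add: pconst_def deriv_single Dm_def)

lemma deriv_pvar: "deriv (pvar v) = pvar (shift v)"
  by (simp add: pvar_def deriv_single Dm_def)

lemma deriv_0: "deriv 0 = 0" using deriv_pconst[of 0] by (simp add: pconst_0)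

lemma keys_mono_shift: "Poly_Mapping.keys (mo - sg v + sg w) \<subseteq> Poly_Mapping.keys mo \<union> {w}"
  by (auto simp: in_keys_iff lookup_add lookup_minus lookup_single when_def split: if_splits)

lemma deriv_polyring:
  assumes "p \<in> polyring V" "\<And>v. v \<in> V \<Longrightarrow> shift v \<in> W" "V \<subseteq> W"
  shows "deriv p \<in> polyring W"
  unfolding deriv_lin lin_def Dm_def
proof (intro polyring_sum)
  fix mo v assume mo: "mo \<in> Poly_Mapping.keys p" and v: "v \<in> Poly_Mapping.keys mo"
  have "Poly_Mapping.keys mo \<subseteq> V" using mo assms(1) by (auto simp: vars_def polyring_def)
  then have "Poly_Mapping.keys (mo - sg v + sg (shift v)) \<subseteq> W"
    using keys_mono_shift[of mo v "shift v"] v assms(2,3) by blast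
  then show "Poly_Mapping.single (mo - sg v + sg (shift v)) (Poly_Mapping.lookup p mo * of_nat (Poly_Mapping.lookup mo v)) \<in> polyring W"
    using vars_single unfolding polyring_def by blast
qed

lemma trunc_deriv: "trunc (deriv p) = 0"
  unfolding deriv_lin lin_def Dm_def trunc_sum trunc_single
proof (intro sum.neutral ballI)
  fix mo :: "dvar \<Rightarrow>\<^sub>0 nat" and v :: dvar assume v: "v \<in> Poly_Mapping.keys mo"
  have "shift v \<in> Poly_Mapping.keys (mo - sg v + sg (shift v))"
    using v by (cases v) (auto simp: in_keys_iff lookup_add lookup_single)
  moreover have "shift v \<notin> Z0" by (cases v) (auto simp: Z0_def)
  ultimately show "Tm (mo - sg v + sg (shift v)) (Poly_Mapping.lookup p mo * of_nat (Poly_Mapping.lookup mo v)) = 0"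
    by (auto simp: Tm_def)
qed



abbreviation mp :: "complex poly \<Rightarrow> dpoly poly" where "mp \<equiv> map_poly pconst"

definition emb :: "dvar \<Rightarrow> complex poly \<Rightarrow> dpoly" where
  "emb v q = poly (mp q) (pvar v)"

lemma mp_pCons: "mp (pCons c p) = pCons (pconst c) (mp p)"
  by (rule map_poly_pCons) (simp add: pconst_0)

lemma mp_add: "mp (p + q) = mp p + mp q"
  by (rule poly_eqI) (simp add: coeff_map_poly pconst_0 pconst_add)

lemma mp_smult: "mp (smult a q) = smult (pconst a) (mp q)"
  by (rule poly_eqI) (simp add: coeff_map_poly pconst_0 pconst_mult)

lemma mp_mult: "mp (p * q) = mp p * mp q"
proof (induction p)
  case 0 then show ?case by simp
next
  case (pCons a p)
  have "mp (pCons a p * q) = mp (smult a q) + mp (pCons 0 (p * q))"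
    by (simp add: mp_add)
  also have "\<dots> = smult (pconst a) (mp q) + pCons 0 (mp p * mp q)"
    by (simp add: mp_smult mp_pCons pconst_0 pCons.IH)
  also have "\<dots> = mp (pCons a p) * mp q"
    by (simp add: mp_pCons)
  finally show ?case .
qed

lemma emb_pCons: "emb v (pCons c p) = pconst c + pvar v * emb v p"
  by (simp add: emb_def mp_pCons)
lemma emb_0: "emb v 0 = 0" by (simp add: emb_def)
lemma emb_add: "emb v (p + q) = emb v p + emb v q" by (simp add: emb_def mp_add)
lemma emb_mult: "emb v (p * q) = emb v p * emb v q" by (simp add: emb_def mp_mult)
lemma emb_1: "emb v 1 = 1" by (simp add: emb_def pconst_1)
lemma emb_power: "emb v (p ^ k) = emb v p ^ k"
  by (induction k) (simp_all add: emb_1 emb_mult)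
lemma emb_monom: "emb v (monom c k) = pconst c * pvar v ^ k"
  by (simp add: emb_def poly_monom map_poly_monom pconst_0)
lemma emb_sum: "emb v (sum f A) = (\<Sum>a\<in>A. emb v (f a))"
  by (induction A rule: infinite_finite_induct) (simp_all add: emb_0 emb_add)

lemma emb_pderiv: "deriv (emb v p) = emb v (pderiv p) * pvar (shift v)"
proof (induction p)
  case 0 then show ?case by (simp add: emb_0 deriv_0)
next
  case (pCons a p)
  have "deriv (emb v (pCons a p)) = pvar (shift v) * emb v p + pvar v * (emb v (pderiv p) * pvar (shift v))"
    by (simp add: emb_pCons deriv_add deriv_mult deriv_pconst deriv_pvar pCons.IH)
  also have "\<dots> = emb v (pderiv (pCons a p)) * pvar (shift v)"
    by (simp add: pderiv_pCons emb_add emb_pCons pconst_0 algebra_simps)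
  finally show ?case .
qed

lemma emb_polyring: "v \<in> V \<Longrightarrow> emb v p \<in> polyring V"
proof (induction p)
  case 0 then show ?case by (simp add: emb_0 polyring_0)
next
  case (pCons a p)
  then show ?case unfolding emb_pCons
    by (intro polyring_add polyring_mult polyring_pconst polyring_pvar) auto
qed



lemma order_prod_linear:
  fixes A :: "complex set"
  assumes "finite A"
  shows "order a (\<Prod>r\<in>A. [:-r, 1:]) = (if a \<in> A then 1 else 0)"
  using assms
proof (induction A rule: finite_induct)
  case empty then show ?case by (simp add: order_0I)
next
  case (insert r A)
  have nz: "(\<Prod>r\<in>A. [:-r, 1:]) \<noteq> (0 :: complex poly)" using insert.hyps(1) by (simp add: prod_zero_iff)
  have o1: "order a [:-r, 1:] = (if a = r then 1 else 0)"
  proof (cases "a = r")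
    case True then show ?thesis using order_power_n_n[of a 1] by simp
  next
    case False
    have "poly [:-r, 1:] a \<noteq> 0" using False by simp
    then show ?thesis using False by (simp add: order_0I)
  qed
  have "order a (\<Prod>r\<in>insert r A. [:-r, 1:]) = order a ([:-r, 1:] * (\<Prod>r\<in>A. [:-r, 1:]))"
    using insert.hyps by simp
  also have "\<dots> = order a [:-r, 1:] + order a (\<Prod>r\<in>A. [:-r, 1:])"
  proof (rule order_mult)
    have "[:-r, 1:] \<noteq> (0 :: complex poly)" by simp
    then show "[:-r, 1:] * (\<Prod>r\<in>A. [:-r, 1:]) \<noteq> 0" using nz by (rule no_zero_divisors)
  qed
  finally show ?case using insert o1 by auto
qed

lemma no_common_root_bezout:
  fixes q r :: "complex poly"
  assumes nz: "q \<noteq> 0" and nc: "\<And>z. \<not> (poly q z = 0 \<and> poly r z = 0)"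
  shows "\<exists>a b. a * q + b * r = 1"
proof -
  define P where "P k \<longleftrightarrow> (\<exists>a b. a * q + b * r \<noteq> 0 \<and> degree (a * q + b * r) = k)" for k
  have "P (degree q)" unfolding P_def using nz by (intro exI[of _ 1] exI[of _ 0]) simp
  define k0 where "k0 = (LEAST k. P k)"
  have "P k0" unfolding k0_def by (rule LeastI) fact
  then obtain a0 b0 where ab0: "a0 * q + b0 * r \<noteq> 0" "degree (a0 * q + b0 * r) = k0"
    unfolding P_def by blast
  define d where "d = a0 * q + b0 * r"
  have dnz: "d \<noteq> 0" using ab0 d_def by simp
  have minim: "a * q + b * r \<noteq> 0 \<Longrightarrow> degree d \<le> degree (a * q + b * r)" for a b
  proof -
    assume "a * q + b * r \<noteq> 0"
    then have "P (degree (a * q + b * r))" unfolding P_def by blast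
    then have "k0 \<le> degree (a * q + b * r)" unfolding k0_def by (rule Least_le)
    then show ?thesis using ab0 d_def by simp
  qed
  have dvd: "d dvd x" if x: "x = a * q + b * r" for x a b
  proof -
    have "x mod d = x - x div d * d" by (simp add: minus_div_mult_eq_mod)
    also have "\<dots> = (a - x div d * a0) * q + (b - x div d * b0) * r"
      unfolding x d_def by (simp add: algebra_simps)
    finally have e: "x mod d = (a - x div d * a0) * q + (b - x div d * b0) * r" .
    have "x mod d = 0"
    proof (rule ccontr)
      assume ne: "x mod d \<noteq> 0"
      then have "degree (x mod d) < degree d" using degree_mod_less[OF dnz, of x] by simp
      moreover have "degree d \<le> degree (x mod d)" using minim[of "a - x div d * a0" "b - x div d * b0"] ne e by simp
      ultimately show False by simp
    qed
    then show ?thesis by (simp add: mod_0_imp_dvd)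
  qed
  have dq: "d dvd q" by (rule dvd[of q 1 0]) simp
  have dr: "d dvd r" by (rule dvd[of r 0 1]) simp
  have "degree d = 0"
  proof (rule ccontr)
    assume "degree d \<noteq> 0"
    then have "\<not> (\<exists>a l. a \<noteq> 0 \<and> l = 0 \<and> d = pCons a l)" by auto
    then obtain z where z: "poly d z = 0" using fundamental_theorem_of_algebra_alt by blast
    from dq obtain k where "q = d * k" by (rule dvdE)
    then have "poly q z = 0" using z by simp
    moreover from dr obtain k' where "r = d * k'" by (rule dvdE)
    then have "poly r z = 0" using z by simp
    ultimately show False using nc by blast
  qed
  then have dc: "d = [:coeff d 0:]" by (rule degree_0_id[symmetric])
  then have c0: "coeff d 0 \<noteq> 0" using dnz by auto
  have "smult (inverse (coeff d 0)) a0 * q + smult (inverse (coeff d 0)) b0 * r = smult (inverse (coeff d 0)) d"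
    unfolding d_def by (simp add: smult_add_right)
  also have "\<dots> = 1" by (subst dc) (simp add: c0 one_pCons)
  finally show ?thesis by blast
qed

lemma squarefree_part:
  fixes p :: "complex poly"
  assumes p: "p \<noteq> 0"
  obtains q where "p dvd q ^ degree p" "\<exists>a b. a * q + b * pderiv q = 1"
proof -
  define A where "A = {x. poly p x = 0}"
  have fA: "finite A" unfolding A_def using poly_roots_finite[OF p] .
  define q where "q = (\<Prod>r\<in>A. [:-r, 1:])"
  have qnz: "q \<noteq> 0" unfolding q_def using fA by (simp add: prod_zero_iff)
  have "\<forall>x. poly p x = 0 \<longrightarrow> poly q x = 0"
    unfolding q_def A_def using fA[unfolded A_def] by (auto simp: poly_prod prod_zero_iff)
  then have 1: "p dvd q ^ degree p" using nullstellensatz_univariate[of p q] p by blast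
  have "rsquarefree q" unfolding rsquarefree_def using qnz
    by (simp add: q_def order_prod_linear[OF fA])
  then have "\<And>z. \<not> (poly q z = 0 \<and> poly (pderiv q) z = 0)" by (simp add: rsquarefree_roots)
  then have 2: "\<exists>a b. a * q + b * pderiv q = 1" by (rule no_common_root_bezout[OF qnz])
  show ?thesis using that 1 2 by blast
qed



lemma lin_dep:
  fixes w :: "nat \<Rightarrow> dpoly" and B :: "dpoly set"
  assumes fB: "finite B" and w: "\<And>i. i \<le> N \<Longrightarrow> \<exists>a. w i = (\<Sum>b\<in>B. pconst (a b) * b)"
    and N: "card B \<le> N"
  shows "\<exists>l. (\<exists>i\<le>N. l i \<noteq> 0) \<and> (\<Sum>i\<le>N. pconst (l i) * w i) = 0"
proof (cases "inj_on w {..N}")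
  case False
  then obtain i j where ij: "i \<le> N" "j \<le> N" "i \<noteq> j" "w i = w j"
    unfolding inj_on_def by auto
  define l where "l k = (if k = i then 1 else if k = j then -1 else (0::complex))" for k
  have e: "pconst (l k) * w k = (if k = i then w i else 0) - (if k = j then w j else 0)" for k
    using ij by (auto simp: l_def pconst_1 pconst_0 pconst_uminus)
  have "(\<Sum>k\<le>N. pconst (l k) * w k) = 0"
    unfolding e sum_subtractf using ij by (simp add: sum.delta)
  moreover have "l i \<noteq> 0" by (simp add: l_def)
  ultimately show ?thesis using ij by blast
next
  case True
  interpret V: vector_space "\<lambda>(c::complex) (p::dpoly). pconst c * p"
    by standard (simp_all add: algebra_simps pconst_add pconst_mult pconst_1)
  define S where "S = w ` {..N}"
  have cS: "card S = Suc N" unfolding S_def using card_image[OF True] by simp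
  have sp: "S \<subseteq> V.span B"
  proof
    fix x assume "x \<in> S"
    then obtain i where i: "i \<le> N" "x = w i" unfolding S_def by auto
    then obtain a where "x = (\<Sum>b\<in>B. pconst (a b) * b)" using w by blast
    moreover have "pconst (a b) * b \<in> V.span B" if "b \<in> B" for b
      using V.span_scale[OF V.span_base[OF that], of "a b"] by simp
    ultimately show "x \<in> V.span B" using V.span_sum[of B "\<lambda>b. pconst (a b) * b" B] by simp
  qed
  have "\<not> V.independent S"
  proof
    assume "V.independent S"
    from V.independent_span_bound[OF fB this sp] have "card S \<le> card B" by simp
    then show False using cS N by simp
  qed
  then obtain t u where tu: "finite t" "t \<subseteq> S" "(\<Sum>v\<in>t. pconst (u v) * v) = 0" "\<exists>v\<in>t. u v \<noteq> 0"
    unfolding V.dependent_explicit by blast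
  define K where "K = {k \<in> {..N}. w k \<in> t}"
  define l where "l k = (if w k \<in> t then u (w k) else 0)" for k
  have tK: "w ` K = t" using tu(2) unfolding K_def S_def by auto
  have injK: "inj_on w K" using True unfolding K_def by (rule inj_on_subset) auto
  have "(\<Sum>k\<le>N. pconst (l k) * w k) = (\<Sum>k\<in>K. pconst (u (w k)) * w k)"
    unfolding K_def l_def by (rule sum.mono_neutral_cong_right) (auto simp: pconst_0)
  also have "\<dots> = (\<Sum>v\<in>t. pconst (u v) * v)"
    unfolding tK[symmetric] by (rule sum.reindex[OF injK, symmetric, unfolded comp_def])
  also have "\<dots> = 0" by (rule tu(3))
  finally have 1: "(\<Sum>k\<le>N. pconst (l k) * w k) = 0" .
  from tu(4) obtain v where v: "v \<in> t" "u v \<noteq> 0" by blast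
  then obtain k where "k \<le> N" "w k = v" using tu(2) unfolding S_def by auto
  then have "\<exists>i\<le>N. l i \<noteq> 0" using v by (auto simp: l_def)
  then show ?thesis using 1 by blast
qed



lemma V0_Z0: "vars_upto n m 0 \<subseteq> Z0" by (auto simp: vars_upto_def Z0_def)
lemma V0_V1: "vars_upto n m 0 \<subseteq> vars_upto n m 1" by (auto simp: vars_upto_def)
lemma V1_Va: "vars_upto n m 1 \<subseteq> vars_all n m" by (auto simp: vars_upto_def vars_all_def)
lemma Va_Z0: "vars_all n m \<inter> Z0 \<subseteq> vars_upto n m 0"
proof
  fix v assume "v \<in> vars_all n m \<inter> Z0"
  then show "v \<in> vars_upto n m 0" by (cases v) (auto simp: vars_upto_def vars_all_def Z0_def)
qed
lemma shift_V0: "v \<in> vars_upto n m 0 \<Longrightarrow> shift v \<in> vars_upto n m 1"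
  by (auto simp: vars_upto_def)

lemma trunc_pvar1: "trunc (pvar (X i (Suc p))) = 0"
  by (simp add: pvar_def trunc_single Tm_def Z0_def)

lemma trunc_1: "trunc 1 = 1"
  by (rule trunc_id) (simp add: vars_1)

theorem proposition3p1:
  fixes n m s :: nat and f g :: "nat \<Rightarrow> dpoly"
  assumes f_poly: "\<forall>i<n. f i \<in> polyring (vars_upto n m 0)"
    and g_poly: "\<forall>i<s. g i \<in> polyring (vars_upto n m 0)"
    and rad: "radical_in (polyring (vars_upto n m 0))
               (ideal_in (polyring (vars_upto n m 0)) (g ` {..<s}))"
    and zdim: "zero_dim_in (polyring (vars_upto n m 0))
               (ideal_in (polyring (vars_upto n m 0)) (g ` {..<s}))"
  shows "1 \<in> diff_ideal_in (polyring (vars_all n m))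
            ((\<lambda>i. pvar (X i 1) - f i) ` {..<n} \<union> g ` {..<s})
     \<longleftrightarrow> 1 \<in> ideal_in (polyring (vars_upto n m 1))
            ((\<lambda>i. pvar (X i 1) - f i) ` {..<n} \<union> g ` {..<s} \<union> (\<lambda>i. deriv (g i)) ` {..<s})"
proof -
  define R0 where "R0 = polyring (vars_upto n m 0)"
  define R1 where "R1 = polyring (vars_upto n m 1)"
  define Ra where "Ra = polyring (vars_all n m)"
  define I0 where "I0 = ideal_in R0 (g ` {..<s})"
  define Gd where "Gd = (\<lambda>i. pvar (X i 1) - f i) ` {..<n} \<union> g ` {..<s}"
  define GJ where "GJ = Gd \<union> (\<lambda>i. deriv (g i)) ` {..<s}"
  define J where "J = ideal_in R1 GJ"
  have R01: "R0 \<subseteq> R1" unfolding R0_def R1_def by (rule polyring_mono[OF V0_V1])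
  have R1a: "R1 \<subseteq> Ra" unfolding Ra_def R1_def by (rule polyring_mono[OF V1_Va])
  have I0J: "I0 \<subseteq> J" unfolding I0_def J_def GJ_def Gd_def by (rule ideal_in_mono[OF R01]) auto
  have genJ: "y \<in> J" if "y \<in> GJ" for y unfolding J_def R1_def by (rule ideal_in_gen[OF that polyring_1])
  have gJ: "i < s \<Longrightarrow> g i \<in> J" for i by (rule genJ) (simp add: GJ_def Gd_def)
  have dgJ: "i < s \<Longrightarrow> deriv (g i) \<in> J" for i by (rule genJ) (simp add: GJ_def)
  have fJ: "i < n \<Longrightarrow> pvar (X i 1) - f i \<in> J" for i by (rule genJ) (simp add: GJ_def Gd_def)
  note Jadd = ideal_in_add[OF R1_def, where S=GJ, folded J_def]
  note Jmult = ideal_in_mult[OF R1_def, where S=GJ, folded J_def]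
  note Jdiff = ideal_in_diff[OF R1_def, where S=GJ, folded J_def]
  note Jsum = ideal_in_sum[OF R1_def, where S=GJ, folded J_def]
  note I0mult = ideal_in_mult[OF R0_def, where S="g ` {..<s}", folded I0_def]
  note I0sum = ideal_in_sum[OF R0_def, where S="g ` {..<s}", folded I0_def]

  have xJ: "pvar (X j 1) \<in> J" if j: "j < n" for j
  proof -
    define v where "v = X j 0"
    have v0: "v \<in> vars_upto n m 0" unfolding v_def vars_upto_def using j by auto
    have sv: "shift v = X j 1" by (simp add: v_def)
    define x where "x = pvar v"
    have xR0: "x \<in> R0" unfolding x_def R0_def by (rule polyring_pvar[OF v0])
    from zdim obtain B where B: "finite B" "B \<subseteq> R0"
      "\<forall>p\<in>R0. \<exists>a. p - (\<Sum>b\<in>B. pconst (a b) * b) \<in> I0"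
      unfolding zero_dim_in_def R0_def I0_def by blast
    have "\<forall>i. \<exists>a. x ^ i - (\<Sum>b\<in>B. pconst (a b) * b) \<in> I0"
      using B(3) polyring_power[OF xR0[unfolded R0_def]] unfolding R0_def by blast
    then obtain A where A: "\<And>i. x ^ i - (\<Sum>b\<in>B. pconst (A i b) * b) \<in> I0"
      using choice[of "\<lambda>i a. x ^ i - (\<Sum>b\<in>B. pconst (a b) * b) \<in> I0"] by blast
    define w where "w i = (\<Sum>b\<in>B. pconst (A i b) * b)" for i
    define N where "N = card B"
    obtain l where l: "\<exists>i\<le>N. l i \<noteq> 0" "(\<Sum>i\<le>N. pconst (l i) * w i) = 0"
      using lin_dep[OF B(1), of N w] unfolding N_def w_def by blast
    define p where "p = (\<Sum>i\<le>N. monom (l i) i)"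
    have cp: "coeff p k = l k" if "k \<le> N" for k
      using that by (simp add: p_def coeff_sum coeff_monom)
    have pnz: "p \<noteq> 0" using l(1) cp by auto
    have "emb v p = (\<Sum>i\<le>N. pconst (l i) * x ^ i)"
      by (simp add: p_def emb_sum emb_monom x_def)
    also have "\<dots> = (\<Sum>i\<le>N. pconst (l i) * (x ^ i - w i)) + (\<Sum>i\<le>N. pconst (l i) * w i)"
      by (simp add: sum.distrib[symmetric] algebra_simps)
    also have "\<dots> = (\<Sum>i\<le>N. pconst (l i) * (x ^ i - w i))" using l(2) by simp
    finally have "emb v p = (\<Sum>i\<le>N. pconst (l i) * (x ^ i - w i))" .
    moreover have "(\<Sum>i\<le>N. pconst (l i) * (x ^ i - w i)) \<in> I0"
      by (rule I0sum, rule I0mult) (auto simp: w_def A R0_def polyring_pconst)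
    ultimately have pI: "emb v p \<in> I0" by simp
    obtain q where q: "p dvd q ^ degree p" "\<exists>a b. a * q + b * pderiv q = 1"
      using squarefree_part[OF pnz] by blast
    from q(1) obtain h where h: "q ^ degree p = p * h" by (rule dvdE)
    have "emb v q ^ degree p = emb v h * emb v p" by (simp add: emb_power[symmetric] h emb_mult mult.commute)
    also have "\<dots> \<in> I0" by (rule I0mult[OF pI]) (simp add: R0_def emb_polyring[OF v0])
    finally have "emb v q ^ degree p \<in> I0" .
    moreover have qR0: "emb v q \<in> R0" unfolding R0_def by (rule emb_polyring[OF v0])
    ultimately have qI: "emb v q \<in> I0" using rad unfolding radical_in_def R0_def I0_def by blast
    then obtain F c where F: "finite F" "F \<subseteq> g ` {..<s}" "\<forall>y\<in>F. c y \<in> R0" "emb v q = (\<Sum>y\<in>F. c y * y)"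
      unfolding I0_def by (rule ideal_inE)
    have "deriv (emb v q) = (\<Sum>y\<in>F. deriv (c y) * y + c y * deriv y)"
      using F(4) by (simp add: deriv_sum deriv_mult)
    also have "\<dots> \<in> J"
    proof (rule Jsum)
      fix y assume y: "y \<in> F"
      then obtain i where i: "i < s" "y = g i" using F(2) by auto
      have cy: "c y \<in> polyring (vars_upto n m 0)" using F(3) y R0_def by simp
      have "deriv (c y) \<in> R1" unfolding R1_def
        by (rule deriv_polyring[OF cy shift_V0 V0_V1])
      then have 1: "deriv (c y) * y \<in> J" using Jmult[OF gJ[OF i(1)]] i(2) by simp
      have "c y \<in> R1" using cy R01 R0_def by auto
      then have 2: "c y * deriv y \<in> J" using Jmult[OF dgJ[OF i(1)]] i(2) by simp
      show "deriv (c y) * y + c y * deriv y \<in> J" by (rule Jadd[OF 1 2])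
    qed
    finally have dq: "emb v (pderiv q) * pvar (X j 1) \<in> J" by (simp add: emb_pderiv sv)
    from q(2) obtain a b where ab: "a * q + b * pderiv q = 1" by blast
    have "pvar (X j 1) = pvar (X j 1) * emb v (a * q + b * pderiv q)" by (simp add: ab emb_1)
    also have "\<dots> = (emb v a * pvar (X j 1)) * emb v q + emb v b * (emb v (pderiv q) * pvar (X j 1))"
      by (simp add: emb_add emb_mult algebra_simps)
    also have "\<dots> \<in> J"
    proof (rule Jadd)
      have "emb v a * pvar (X j 1) \<in> R1" unfolding R1_def
        by (intro polyring_mult polyring_pvar emb_polyring) (use v0 V0_V1 j in \<open>auto simp: vars_upto_def\<close>)
      then show "emb v a * pvar (X j 1) * emb v q \<in> J" using Jmult[OF I0J[THEN subsetD, OF qI]] by simp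
      have "emb v b \<in> R1" unfolding R1_def by (rule emb_polyring) (use v0 V0_V1 in auto)
      then show "emb v b * (emb v (pderiv q) * pvar (X j 1)) \<in> J" using Jmult[OF dq] by simp
    qed
    finally show ?thesis .
  qed

  have fwd: "1 \<in> J" if one: "1 \<in> diff_ideal_in Ra Gd"
  proof -
    from one obtain F c where F: "finite F" "F \<subseteq> {(deriv ^^ k) h | h k. h \<in> Gd}"
      "\<forall>y\<in>F. c y \<in> Ra" "1 = (\<Sum>y\<in>F. c y * y)"
      unfolding diff_ideal_in_def by (rule ideal_inE)
    have "1 = trunc 1" by (simp add: trunc_1)
    also have "\<dots> = (\<Sum>y\<in>F. trunc (c y) * trunc y)"
      by (subst F(4)) (simp add: trunc_sum trunc_mult)
    also have "\<dots> \<in> J"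
    proof (rule Jsum)
      fix y assume y: "y \<in> F"
      have "trunc (c y) \<in> polyring (vars_all n m \<inter> Z0)"
        using F(3) y Ra_def trunc_polyring by simp
      then have tc: "trunc (c y) \<in> R1" using polyring_mono[OF Va_Z0] R01 R0_def by auto
      from y F(2) obtain h k where hk: "y = (deriv ^^ k) h" "h \<in> Gd" by blast
      have "trunc y \<in> J"
      proof (cases k)
        case 0
        then have yh: "y = h" using hk by simp
        show ?thesis
        proof (cases "h \<in> g ` {..<s}")
          case True
          then obtain i where i: "i < s" "h = g i" by auto
          have "vars (g i) \<subseteq> Z0" using g_poly i V0_Z0 unfolding polyring_def by blast
          then have "trunc y = g i" using yh i by (simp add: trunc_id)
          then show ?thesis using gJ[OF i(1)] by simp
        next
          case False
          then obtain i where i: "i < n" "h = pvar (X i 1) - f i" using hk(2) unfolding Gd_def by auto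
          have "vars (f i) \<subseteq> Z0" using f_poly i V0_Z0 unfolding polyring_def by blast
          then have "trunc y = (pvar (X i 1) - f i) - pvar (X i 1)"
            using yh i by (simp add: trunc_diff trunc_id trunc_pvar1)
          then show ?thesis using Jdiff[OF fJ[OF i(1)] xJ[OF i(1)]] by simp
        qed
      next
        case (Suc k')
        then have "trunc y = 0" using hk by (simp add: trunc_deriv)
        then show ?thesis using ideal_in_0 J_def by simp
      qed
      then show "trunc (c y) * trunc y \<in> J" by (rule Jmult[OF _ tc])
    qed
    finally show ?thesis .
  qed

  have bwd: "J \<subseteq> diff_ideal_in Ra Gd"
    unfolding J_def diff_ideal_in_def
  proof (rule ideal_in_mono[OF R1a])
    show "GJ \<subseteq> {(deriv ^^ k) h | h k. h \<in> Gd}"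
    proof
      fix y assume "y \<in> GJ"
      then consider "y \<in> Gd" | i where "i < s" "y = deriv (g i)" unfolding GJ_def by auto
      then show "y \<in> {(deriv ^^ k) h | h k. h \<in> Gd}"
      proof cases
        case 1 then show ?thesis by (intro CollectI exI[of _ y] exI[of _ 0]) simp
      next
        case 2 then show ?thesis by (intro CollectI exI[of _ "g i"] exI[of _ 1]) (simp add: Gd_def)
      qed
    qed
  qed
  show ?thesis
    using fwd bwd unfolding Ra_def Gd_def J_def R1_def GJ_def by blast
qed

end
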